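(* The growth function $g_M:\mathbb{N}_+\to\mathbb{N}$ of every multiway system $M$ is primitive recursive.
   Context: A (string-based) multiway system is a triple $M=(R,s_{\text{init}},\Sigma)$ with $\Sigma$ a finite alphabet, $R$ a finite set of string replacement rules $r\to t$ ($r,t\in\Sigma^*$), and $s_{\text{init}}\in\Sigma^*$. Its states graph has as vertices the strings reachable from $s_{\text{init}}$, with an edge $u\to v$ whenever $v$ arises from $u$ by replacing one occurrence of some rule's left side by its right side. The growth function $g_M(n)$ is the number of states whose shortest-path distance from $s_{\text{init}}$ equals $n-1$ (i.e. the number of new states first appearing in generation $n$). *)

theory Defs
  imports Main
begin

text \<open>An n-ary function on nat is represented as a function on nat lists; only its
values on lists of length n matter. prim_rec n f: f is an n-ary primitive recursive
function (standard inductive definition: zero, successor, projections, composition,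
primitive recursion on the first argument).\<close>

inductive prim_rec :: "nat \<Rightarrow> (nat list \<Rightarrow> nat) \<Rightarrow> bool" where
  pr_zero: "prim_rec n (\<lambda>xs. 0)"
| pr_succ: "prim_rec 1 (\<lambda>xs. Suc (hd xs))"
| pr_proj: "i < n \<Longrightarrow> prim_rec n (\<lambda>xs. xs ! i)"
| pr_comp: "prim_rec m f \<Longrightarrow> length gs = m \<Longrightarrow> (\<forall>g\<in>set gs. prim_rec n g)
            \<Longrightarrow> prim_rec n (\<lambda>xs. f (map (\<lambda>g. g xs) gs))"
| pr_rec: "prim_rec n f \<Longrightarrow> prim_rec (Suc (Suc n)) g
            \<Longrightarrow> prim_rec (Suc n) (\<lambda>xs. case xs of [] \<Rightarrow> f []
                   | y # ys \<Rightarrow> rec_nat (f ys) (\<lambda>k r. g (k # r # ys)) y)"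

definition mw_step :: "('a list \<times> 'a list) set \<Rightarrow> 'a list \<Rightarrow> 'a list \<Rightarrow> bool" where
  "mw_step R u v \<longleftrightarrow> (\<exists>(r, t)\<in>R. \<exists>x y. u = x @ r @ y \<and> v = x @ t @ y)"

definition mw_layer :: "('a list \<times> 'a list) set \<Rightarrow> 'a list \<Rightarrow> nat \<Rightarrow> 'a list set" where
  "mw_layer R s k = {v. (mw_step R ^^ k) s v \<and> (\<forall>j<k. \<not> (mw_step R ^^ j) s v)}"

text \<open>Growth function g_M(n) = number of states at distance n - 1 (used for n \<ge> 1).\<close>
definition growth :: "('a list \<times> 'a list) set \<Rightarrow> 'a list \<Rightarrow> nat \<Rightarrow> nat" where
  "growth R s n = card (mw_layer R s (n - 1))"

end

theory Submission
  imports Defs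
begin

definition PRf :: "nat \<Rightarrow> (nat list \<Rightarrow> nat) \<Rightarrow> bool" where
  "PRf n g \<longleftrightarrow> (\<exists>f. prim_rec n f \<and> (\<forall>xs. length xs = n \<longrightarrow> f xs = g xs))"

lemma PRf_cong: "PRf n f \<Longrightarrow> (\<And>xs. length xs = n \<Longrightarrow> f xs = g xs) \<Longrightarrow> PRf n g"
  unfolding PRf_def by metis

lemma PRf_zero: "PRf n (\<lambda>_. 0)"
  unfolding PRf_def using pr_zero by blast

lemma PRf_proj: "i < n \<Longrightarrow> PRf n (\<lambda>xs. xs ! i)"
  unfolding PRf_def using pr_proj by blast

lemma PRf_succ: "PRf 1 (\<lambda>xs. Suc (xs ! 0))"
  unfolding PRf_def
proof (intro exI conjI allI impI)
  show "prim_rec 1 (\<lambda>xs. Suc (hd xs))" by (rule pr_succ)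
  fix xs :: "nat list" assume "length xs = 1"
  then show "Suc (hd xs) = Suc (xs ! 0)" by (cases xs) auto
qed

lemma PRf_comp:
  assumes "PRf m f" "length gs = m" "\<forall>g\<in>set gs. PRf n g"
  shows "PRf n (\<lambda>xs. f (map (\<lambda>g. g xs) gs))"
proof -
  obtain f' where f': "prim_rec m f'" "\<forall>xs. length xs = m \<longrightarrow> f' xs = f xs"
    using assms(1) unfolding PRf_def by blast
  from assms(3) have "\<forall>g\<in>set gs. \<exists>g'. prim_rec n g' \<and> (\<forall>xs. length xs = n \<longrightarrow> g' xs = g xs)"
    unfolding PRf_def by blast
  then obtain G where G: "\<forall>g\<in>set gs. prim_rec n (G g) \<and> (\<forall>xs. length xs = n \<longrightarrow> G g xs = g xs)"
    by metis
  have "prim_rec n (\<lambda>xs. f' (map (\<lambda>g. g xs) (map G gs)))"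
    by (rule pr_comp) (use f' G assms(2) in auto)
  moreover have "f' (map (\<lambda>g. g xs) (map G gs)) = f (map (\<lambda>g. g xs) gs)" if "length xs = n" for xs
  proof -
    have "map (\<lambda>g. g xs) (map G gs) = map (\<lambda>g. g xs) gs"
      unfolding map_map comp_def using G that by (intro map_cong) auto
    moreover have "f' (map (\<lambda>g. g xs) gs) = f (map (\<lambda>g. g xs) gs)" using f' assms(2) by simp
    ultimately show ?thesis by metis
  qed
  ultimately show ?thesis unfolding PRf_def by blast
qed

lemma PRf_rec:
  assumes "PRf n f" "PRf (Suc (Suc n)) g"
  shows "PRf (Suc n) (\<lambda>xs. rec_nat (f (tl xs)) (\<lambda>k r. g (k # r # tl xs)) (hd xs))"
proof -
  obtain f' where f': "prim_rec n f'" "\<forall>xs. length xs = n \<longrightarrow> f' xs = f xs"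
    using assms(1) unfolding PRf_def by blast
  obtain g' where g': "prim_rec (Suc (Suc n)) g'" "\<forall>xs. length xs = Suc (Suc n) \<longrightarrow> g' xs = g xs"
    using assms(2) unfolding PRf_def by blast
  have "prim_rec (Suc n) (\<lambda>xs. case xs of [] \<Rightarrow> f' []
                   | y # ys \<Rightarrow> rec_nat (f' ys) (\<lambda>k r. g' (k # r # ys)) y)"
    by (rule pr_rec[OF f'(1) g'(1)])
  moreover have "(case xs of [] \<Rightarrow> f' [] | y # ys \<Rightarrow> rec_nat (f' ys) (\<lambda>k r. g' (k # r # ys)) y)
      = rec_nat (f (tl xs)) (\<lambda>k r. g (k # r # tl xs)) (hd xs)" if l0: "length xs = Suc n" for xs
  proof -
    obtain y ys where xs: "xs = y # ys" and l: "length ys = n"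
      using l0 by (cases xs) auto
    have "rec_nat (f' ys) (\<lambda>k r. g' (k # r # ys)) y = rec_nat (f ys) (\<lambda>k r. g (k # r # ys)) y"
    proof (induction y)
      case 0
      then show ?case using f'(2) l by simp
    next
      case (Suc y)
      have "length (y # rec_nat (f ys) (\<lambda>k r. g (k # r # ys)) y # ys) = Suc (Suc n)" using l by simp
      then show ?case using g'(2) Suc.IH by simp
    qed
    then show ?thesis using xs by simp
  qed
  ultimately show ?thesis unfolding PRf_def by blast
qed

lemma PRf_reindex:
  assumes "PRf m f" "length ids = m" "\<forall>i\<in>set ids. i < n"
  shows "PRf n (\<lambda>xs. f (map (\<lambda>i. xs ! i) ids))"
proof -
  have "PRf n (\<lambda>xs. f (map (\<lambda>g. g xs) (map (\<lambda>i xs. xs ! i) ids)))"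
    by (rule PRf_comp) (use assms in \<open>auto intro: PRf_proj\<close>)
  then show ?thesis by (rule PRf_cong) (simp add: comp_def)
qed

lemma map_nth_shift: "length xs = m + k \<Longrightarrow> map (\<lambda>i. xs ! (i + k)) [0..<m] = drop k xs"
  by (rule nth_equalityI) (auto simp: add.commute)

lemma map_nth_shift2: "length xs = Suc (Suc m) \<Longrightarrow> map (\<lambda>x. xs ! Suc (Suc x)) [0..<m] = drop 2 xs"
  by (rule nth_equalityI) auto

lemma map_nth_shift1: "length xs = Suc m \<Longrightarrow> map (\<lambda>x. xs ! Suc x) [0..<m] = tl xs"
  by (rule nth_equalityI) (auto simp: nth_tl)

lemma PRf_comp1: "PRf 1 h \<Longrightarrow> PRf m f \<Longrightarrow> PRf m (\<lambda>xs. h [f xs])"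
  using PRf_comp[of 1 h "[f]" m] by simp

lemma PRf_comp2: "PRf 2 h \<Longrightarrow> PRf m f \<Longrightarrow> PRf m g \<Longrightarrow> PRf m (\<lambda>xs. h [f xs, g xs])"
  using PRf_comp[of 2 h "[f, g]" m] by simp

lemma PRf_Suc: "PRf m f \<Longrightarrow> PRf m (\<lambda>xs. Suc (f xs))"
  by (rule PRf_cong[OF PRf_comp1[OF PRf_succ]]) auto

lemma PRf_const: "PRf m (\<lambda>xs. c)"
  by (induction c) (auto intro: PRf_zero PRf_Suc)

lemma PRf_drop2: "PRf m f \<Longrightarrow> PRf (Suc (Suc m)) (\<lambda>xs. f (drop 2 xs))"
  by (rule PRf_cong[OF PRf_reindex[where ids="map (\<lambda>i. i + 2) [0..<m]"]])
     (auto simp: map_nth_shift2 comp_def)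

lemma PRf_drop1: "PRf m f \<Longrightarrow> PRf (Suc m) (\<lambda>xs. f (tl xs))"
  by (rule PRf_cong[OF PRf_reindex[where ids="map (\<lambda>i. i + 1) [0..<m]"]])
     (auto simp: map_nth_shift1 comp_def)

lemma PRf_0drop2: "PRf (Suc m) f \<Longrightarrow> PRf (Suc (Suc m)) (\<lambda>xs. f (xs ! 0 # drop 2 xs))"
  by (rule PRf_cong[OF PRf_reindex[where ids="0 # map (\<lambda>i. i + 2) [0..<m]"]])
     (auto simp: map_nth_shift2 comp_def)

lemma PRf_recg:
  assumes "PRf m fz" "PRf (Suc (Suc m)) g" "PRf m nn"
    and "\<And>xs. length xs = m \<Longrightarrow> h xs = rec_nat (fz xs) (\<lambda>k r. g (k # r # xs)) (nn xs)"
  shows "PRf m h"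
proof -
  let ?H = "\<lambda>xs. rec_nat (fz (tl xs)) (\<lambda>k r. g (k # r # tl xs)) (hd xs)"
  have "PRf m (\<lambda>xs. ?H (map (\<lambda>g. g xs) (nn # map (\<lambda>i xs. xs ! i) [0..<m])))"
    by (rule PRf_comp[OF PRf_rec[OF assms(1,2)]]) (use assms(3) in \<open>auto intro: PRf_proj\<close>)
  then show ?thesis
  proof (rule PRf_cong)
    fix xs :: "nat list" assume l: "length xs = m"
    have "map (\<lambda>g. g xs) (map (\<lambda>i xs. xs ! i) [0..<m]) = xs"
      using map_nth[of xs] l by (simp add: comp_def)
    then show "?H (map (\<lambda>g. g xs) (nn # map (\<lambda>i xs. xs ! i) [0..<m])) = h xs"
      using assms(4)[OF l] by simp
  qed
qed

lemma rec_add: "rec_nat c (\<lambda>k r. Suc r) x = x + c" by (induction x) auto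
lemma rec_mult: "rec_nat 0 (\<lambda>k r. r + c) x = x * c" by (induction x) auto
lemma rec_pred: "rec_nat 0 (\<lambda>k r. k) x = x - 1" by (induction x) auto
lemma rec_sub: "rec_nat x (\<lambda>k r. r - Suc 0) y = x - y" by (induction y) auto
lemma rec_pow: "rec_nat (Suc 0) (\<lambda>k r. c * r) x = c ^ x" by (induction x) auto
lemma rec_isz: "rec_nat (Suc 0) (\<lambda>k r. 0) x = (if x = 0 then 1 else 0)" by (induction x) auto

lemma PRf_add: "PRf m f \<Longrightarrow> PRf m g \<Longrightarrow> PRf m (\<lambda>xs. f xs + g xs)"
  by (rule PRf_recg[where fz=g and g="\<lambda>ys. Suc (ys ! 1)" and nn=f])
     (auto intro: PRf_Suc PRf_proj simp: rec_add)

lemma PRf_mult: "PRf m f \<Longrightarrow> PRf m g \<Longrightarrow> PRf m (\<lambda>xs. f xs * g xs)"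
  by (rule PRf_recg[where fz="\<lambda>_. 0" and g="\<lambda>ys. ys ! 1 + g (drop 2 ys)" and nn=f])
     (auto intro: PRf_add PRf_drop2 PRf_proj PRf_const simp: rec_mult)

lemma PRf_pred: "PRf m f \<Longrightarrow> PRf m (\<lambda>xs. f xs - 1)"
  by (rule PRf_recg[where fz="\<lambda>_. 0" and g="\<lambda>ys. ys ! 0" and nn=f])
     (auto intro: PRf_proj PRf_const simp: rec_pred)

lemma PRf_pred': "PRf m f \<Longrightarrow> PRf m (\<lambda>xs. f xs - Suc 0)"
  using PRf_pred by simp

lemma PRf_sub: "PRf m f \<Longrightarrow> PRf m g \<Longrightarrow> PRf m (\<lambda>xs. f xs - g xs)"
  by (rule PRf_recg[where fz=f and g="\<lambda>ys. ys ! 1 - 1" and nn=g])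
     (auto intro: PRf_pred' PRf_proj simp: rec_sub)

lemma PRf_pow: "PRf m f \<Longrightarrow> PRf m g \<Longrightarrow> PRf m (\<lambda>xs. f xs ^ g xs)"
  by (rule PRf_recg[where fz="\<lambda>_. 1" and g="\<lambda>ys. f (drop 2 ys) * ys ! 1" and nn=g])
     (auto intro: PRf_mult PRf_drop2 PRf_proj PRf_const simp: rec_pow)

definition PRP :: "nat \<Rightarrow> (nat list \<Rightarrow> bool) \<Rightarrow> bool" where
  "PRP m P \<longleftrightarrow> PRf m (\<lambda>xs. if P xs then 1 else 0)"

lemma PRP_cong:
  assumes "PRP n P" "\<And>xs. length xs = n \<Longrightarrow> P xs = Q xs" shows "PRP n Q"
  using assms(1) unfolding PRP_def by (rule PRf_cong) (simp add: assms(2))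

lemma PRP_isz: "PRf m f \<Longrightarrow> PRP m (\<lambda>xs. f xs = 0)"
  unfolding PRP_def
  by (rule PRf_recg[where fz="\<lambda>_. 1" and g="\<lambda>ys. 0" and nn=f])
     (auto intro: PRf_const simp: rec_isz)

lemma PRP_le: assumes "PRf m f" "PRf m g" shows "PRP m (\<lambda>xs. f xs \<le> g xs)"
proof -
  have "PRP m (\<lambda>xs. f xs - g xs = 0)" by (rule PRP_isz[OF PRf_sub[OF assms]])
  then show ?thesis by (rule PRP_cong) auto
qed

lemma PRP_less: assumes "PRf m f" "PRf m g" shows "PRP m (\<lambda>xs. f xs < g xs)"
proof -
  have "PRP m (\<lambda>xs. Suc (f xs) \<le> g xs)" by (rule PRP_le[OF PRf_Suc[OF assms(1)] assms(2)])
  then show ?thesis by (rule PRP_cong) auto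
qed

lemma PRP_and: assumes "PRP m P" "PRP m Q" shows "PRP m (\<lambda>xs. P xs \<and> Q xs)"
proof -
  have "PRf m (\<lambda>xs. (if P xs then 1 else 0) * (if Q xs then 1 else 0))"
    by (rule PRf_mult[OF assms[unfolded PRP_def]])
  then show ?thesis unfolding PRP_def by (rule PRf_cong) auto
qed

lemma PRP_not: assumes "PRP m P" shows "PRP m (\<lambda>xs. \<not> P xs)"
proof -
  have "PRf m (\<lambda>xs. 1 - (if P xs then 1 else 0))"
    by (rule PRf_sub[OF PRf_const assms[unfolded PRP_def]])
  then show ?thesis unfolding PRP_def by (rule PRf_cong) auto
qed

lemma PRP_or: assumes "PRP m P" "PRP m Q" shows "PRP m (\<lambda>xs. P xs \<or> Q xs)"
proof -
  have "PRP m (\<lambda>xs. \<not> (\<not> P xs \<and> \<not> Q xs))"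
    by (rule PRP_not[OF PRP_and[OF PRP_not[OF assms(1)] PRP_not[OF assms(2)]]])
  then show ?thesis by (rule PRP_cong) auto
qed

lemma PRP_eq: assumes "PRf m f" "PRf m g" shows "PRP m (\<lambda>xs. f xs = g xs)"
proof -
  have "PRP m (\<lambda>xs. f xs \<le> g xs \<and> g xs \<le> f xs)"
    by (rule PRP_and[OF PRP_le[OF assms] PRP_le[OF assms(2,1)]])
  then show ?thesis by (rule PRP_cong) auto
qed

lemma PRP_const: "PRP m (\<lambda>xs. b)"
  unfolding PRP_def by (rule PRf_const)

lemma PRf_if: assumes "PRP m P" "PRf m f" "PRf m g"
  shows "PRf m (\<lambda>xs. if P xs then f xs else g xs)"
proof -
  have "PRf m (\<lambda>xs. (if P xs then 1 else 0) * f xs + (1 - (if P xs then 1 else 0)) * g xs)"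
    by (rule PRf_add[OF PRf_mult[OF assms(1)[unfolded PRP_def] assms(2)]
                        PRf_mult[OF PRf_sub[OF PRf_const assms(1)[unfolded PRP_def]] assms(3)]])
  then show ?thesis by (rule PRf_cong) auto
qed

lemma nth_Cons_1 [simp]: "(a # xs) ! 1 = xs ! 0" by simp
lemma nth_Cons_2 [simp]: "(a # xs) ! 2 = xs ! 1" by (simp add: numeral_2_eq_2)
lemma nth_Cons_3 [simp]: "(a # xs) ! 3 = xs ! 2" by (simp add: numeral_3_eq_3 numeral_2_eq_2)

lemma rec_mod: "rec_nat 0 (\<lambda>k r. if Suc r = y then 0 else Suc r) x = x mod y"
  by (induction x) (auto simp: mod_Suc)

lemma rec_div: "rec_nat 0 (\<lambda>k r. if Suc k mod y = 0 then Suc r else r) x = x div y"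
  by (induction x) (auto simp: div_Suc)

lemma PRf_mod: "PRf m f \<Longrightarrow> PRf m g \<Longrightarrow> PRf m (\<lambda>xs. f xs mod g xs)"
  by (rule PRf_recg[where fz="\<lambda>_. 0" and g="\<lambda>ys. if Suc (ys ! 1) = g (drop 2 ys) then 0 else Suc (ys ! 1)" and nn=f])
     (auto intro!: PRf_if PRP_eq PRf_Suc PRf_drop2 PRf_proj PRf_const simp: rec_mod cong: if_cong)

lemma PRf_div: "PRf m f \<Longrightarrow> PRf m g \<Longrightarrow> PRf m (\<lambda>xs. f xs div g xs)"
  by (rule PRf_recg[where fz="\<lambda>_. 0" and g="\<lambda>ys. if Suc (ys ! 0) mod g (drop 2 ys) = 0 then Suc (ys ! 1) else ys ! 1" and nn=f])
     (auto intro!: PRf_if PRP_eq PRf_mod PRf_Suc PRf_drop2 PRf_proj PRf_const simp: rec_div cong: if_cong)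

lemma rec_sum: "rec_nat 0 (\<lambda>k r. r + f k) x = (\<Sum>i<x. f i)" by (induction x) auto

lemma PRf_sum:
  assumes "PRf (Suc m) f" "PRf m b" "\<And>xs. length xs = m \<Longrightarrow> h xs = (\<Sum>i<b xs. f (i # xs))"
  shows "PRf m h"
  by (rule PRf_recg[where fz="\<lambda>_. 0" and g="\<lambda>ys. ys ! 1 + f (ys ! 0 # drop 2 ys)" and nn=b])
     (use assms in \<open>auto intro!: PRf_add PRf_0drop2 PRf_proj PRf_const simp: rec_sum\<close>)

lemma PRP_ex:
  assumes "PRP (Suc m) P" "PRf m b" "\<And>xs. length xs = m \<Longrightarrow> Q xs = (\<exists>i<b xs. P (i # xs))"
  shows "PRP m Q"
proof -
  have s: "PRf m (\<lambda>xs. \<Sum>i<b xs. if P (i # xs) then 1 else (0::nat))"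
    by (rule PRf_sum[OF assms(1)[unfolded PRP_def] assms(2)]) simp
  have "PRP m (\<lambda>xs. \<not> (\<Sum>i<b xs. if P (i # xs) then 1 else 0) = (0::nat))"
    by (rule PRP_not[OF PRP_isz[OF s]])
  then show ?thesis by (rule PRP_cong) (auto simp: assms(3))
qed

lemma PRP_all:
  assumes "PRP (Suc m) P" "PRf m b" "\<And>xs. length xs = m \<Longrightarrow> Q xs = (\<forall>i<b xs. P (i # xs))"
  shows "PRP m Q"
proof -
  have "PRP m (\<lambda>xs. \<exists>i<b xs. \<not> P (i # xs))"
    by (rule PRP_ex[OF PRP_not[OF assms(1)] assms(2)]) simp
  then have "PRP m (\<lambda>xs. \<not> (\<exists>i<b xs. \<not> P (i # xs)))"
    by (rule PRP_not)
  then show ?thesis by (rule PRP_cong) (auto simp: assms(3))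
qed

lemma PRP_finex:
  assumes "finite A" "\<forall>a\<in>A. PRP m (P a)"
  shows "PRP m (\<lambda>xs. \<exists>a\<in>A. P a xs)"
  using assms
proof (induction A rule: finite_induct)
  case empty
  then show ?case by (simp add: PRP_const)
next
  case (insert a A)
  have "PRP m (\<lambda>xs. P a xs \<or> (\<exists>a\<in>A. P a xs))"
    by (rule PRP_or) (use insert in auto)
  then show ?case by simp
qed


fun hn :: "nat \<Rightarrow> nat list \<Rightarrow> nat" where
  "hn N [] = 0"
| "hn N (a # as) = a + N * hn N as"

lemma hn_append: "hn N (xs @ ys) = hn N xs + N ^ length xs * hn N ys"
  by (induction xs) (auto simp: algebra_simps)

lemma hn_less: "\<forall>a\<in>set as. a < N \<Longrightarrow> hn N as < N ^ length as"
proof (induction as)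
  case Nil
  then show ?case by simp
next
  case (Cons a as)
  then have h: "hn N as < N ^ length as" and a: "a < N" by auto
  then have "N * Suc (hn N as) \<le> N * N ^ length as" by (intro mult_le_mono2) simp
  then show ?case using a by simp
qed

lemma hn_mod_div:
  assumes "\<forall>a\<in>set as. a < N"
  shows "hn N as mod N ^ k = hn N (take k as) \<and> hn N as div N ^ k = hn N (drop k as)"
proof (cases "k \<le> length as")
  case True
  let ?x = "take k as" and ?y = "drop k as"
  have e: "hn N as = hn N ?x + N ^ k * hn N ?y"
    using hn_append[of N ?x ?y] True by simp
  have lx: "hn N ?x < N ^ k"
    using hn_less[of ?x N] assms True by (auto dest: in_set_takeD)
  then have "0 < N ^ k" by linarith
  then show ?thesis using e lx by simp
next
  case False
  show ?thesis
  proof (cases "as = []")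
    case True
    then show ?thesis by simp
  next
    case ne: False
    then have "0 < N" using assms by (cases as) auto
    then have "N ^ length as \<le> N ^ k" using False by (intro power_increasing) auto
    moreover have "hn N as < N ^ length as" by (rule hn_less[OF assms])
    ultimately have "hn N as < N ^ k" by simp
    then show ?thesis using False by simp
  qed
qed

lemma hn_nth:
  assumes "\<forall>a\<in>set as. a < N" "i < length as"
  shows "hn N as div N ^ i mod N = as ! i"
proof -
  have "hn N as div N ^ i = hn N (drop i as)" using hn_mod_div[OF assms(1)] by blast
  also have "drop i as = as ! i # drop (Suc i) as" using assms(2) by (rule Cons_nth_drop_Suc[symmetric])
  finally have "hn N as div N ^ i = as ! i + N * hn N (drop (Suc i) as)" by simp
  moreover have "as ! i < N" using assms by auto
  ultimately show ?thesis by simp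
qed

locale mws =
  fixes Sig :: "'a set" and R :: "('a list \<times> 'a list) set" and s :: "'a list"
    and c :: "'a \<Rightarrow> nat" and B L :: nat
  assumes finR: "finite R" and RSig: "\<forall>(r, t)\<in>R. set r \<subseteq> Sig \<and> set t \<subseteq> Sig"
    and sSig: "set s \<subseteq> Sig" and B2: "2 \<le> B"
    and cpos: "\<forall>a\<in>Sig. 0 < c a \<and> c a < B" and cinj: "inj_on c Sig"
    and Lb: "\<forall>(r, t)\<in>R. length t \<le> L"
begin

definition enc :: "'a list \<Rightarrow> nat" where "enc w = hn B (map c w)"

lemma enc_digits: "set w \<subseteq> Sig \<Longrightarrow> \<forall>a\<in>set (map c w). a < B"
  using cpos by auto

lemma enc_Nil [simp]: "enc [] = 0" by (simp add: enc_def)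
lemma enc_Cons: "enc (a # w) = c a + B * enc w" by (simp add: enc_def)

lemma enc_append: "enc (x @ y) = enc x + B ^ length x * enc y"
  by (simp add: enc_def hn_append)

lemma enc_less: "set w \<subseteq> Sig \<Longrightarrow> enc w < B ^ length w"
  using hn_less[OF enc_digits] unfolding enc_def by simp

lemma enc_mod: "set w \<subseteq> Sig \<Longrightarrow> enc w mod B ^ k = enc (take k w)"
  using hn_mod_div[OF enc_digits, of w k] unfolding enc_def by (simp add: take_map)

lemma enc_div: "set w \<subseteq> Sig \<Longrightarrow> enc w div B ^ k = enc (drop k w)"
  using hn_mod_div[OF enc_digits, of w k] unfolding enc_def by (simp add: drop_map)

lemma enc_pos: "set w \<subseteq> Sig \<Longrightarrow> 0 < enc w \<longleftrightarrow> w \<noteq> []"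
  using cpos by (cases w) (auto simp: enc_Cons)

lemma len_le_enc: "set w \<subseteq> Sig \<Longrightarrow> length w \<le> enc w"
proof (induction w)
  case Nil
  then show ?case by simp
next
  case (Cons a w)
  then have h1: "length w \<le> enc w" "0 < c a" using cpos by auto
  have "1 * enc w \<le> B * enc w" using B2 by (intro mult_le_mono1) simp
  then show ?case unfolding enc_Cons length_Cons using h1 by linarith
qed

lemma enc_inj: "set w \<subseteq> Sig \<Longrightarrow> set w' \<subseteq> Sig \<Longrightarrow> enc w = enc w' \<Longrightarrow> w = w'"
proof (induction w arbitrary: w')
  case Nil
  then show ?case using enc_pos[of w'] by auto
next
  case (Cons a w)
  have "0 < enc (a # w)" using Cons.prems(1) enc_pos by blast
  then have "w' \<noteq> []" using Cons.prems(3) by auto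
  then obtain b v where w': "w' = b # v" by (cases w') auto
  have ab: "a \<in> Sig" "b \<in> Sig" using Cons.prems w' by auto
  have e: "c a + B * enc w = c b + B * enc v" using Cons.prems(3) w' by (simp add: enc_Cons)
  have "(c a + B * enc w) mod B = c a" using cpos ab by simp
  moreover have "(c b + B * enc v) mod B = c b" using cpos ab by simp
  ultimately have "c a = c b" using e by simp
  then have "a = b" using cinj ab by (meson inj_onD)
  have "(c a + B * enc w) div B = enc w" using cpos ab B2 by simp
  moreover have "(c b + B * enc v) div B = enc v" using cpos ab B2 by simp
  ultimately have "enc w = enc v" using e by simp
  then have "w = v" using Cons.IH Cons.prems w' by auto
  then show ?case using \<open>a = b\<close> w' by simp
qed

definition stepc :: "nat \<Rightarrow> nat \<Rightarrow> bool" where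
  "stepc u v \<longleftrightarrow> (\<exists>(r, t)\<in>R. \<exists>i<Suc u. (i = 0 \<or> 0 < u div B ^ (i - 1))
     \<and> u mod B ^ i = v mod B ^ i
     \<and> u div B ^ i mod B ^ length r = enc r
     \<and> v div B ^ i mod B ^ length t = enc t
     \<and> u div B ^ (i + length r) = v div B ^ (i + length t))"

lemma step_stepc:
  assumes "mw_step R w w'" "set w \<subseteq> Sig"
  shows "stepc (enc w) (enc w')"
proof -
  obtain r t x y where rt: "(r, t) \<in> R" and w: "w = x @ r @ y" and w': "w' = x @ t @ y"
    using assms(1) unfolding mw_step_def by blast
  have sets: "set x \<subseteq> Sig" "set r \<subseteq> Sig" "set y \<subseteq> Sig" "set t \<subseteq> Sig"
    using assms(2) w RSig rt by auto
  then have sw': "set w' \<subseteq> Sig" using w' by auto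
  let ?i = "length x"
  have "?i \<le> length w" using w by simp
  also have "\<dots> \<le> enc w" by (rule len_le_enc[OF assms(2)])
  finally have i: "?i < Suc (enc w)" by simp
  have c1: "?i = 0 \<or> 0 < enc w div B ^ (?i - 1)"
  proof (cases "?i = 0")
    case False
    have "enc w div B ^ (?i - 1) = enc (drop (?i - 1) w)" by (rule enc_div[OF assms(2)])
    moreover have "?i - 1 < length w" using False w by (cases x) auto
    then have "drop (?i - 1) w \<noteq> []" by simp
    moreover have "set (drop (?i - 1) w) \<subseteq> Sig" using assms(2) by (meson set_drop_subset subset_trans)
    ultimately show ?thesis using enc_pos by auto
  qed simp
  have c2: "enc w mod B ^ ?i = enc w' mod B ^ ?i"
    using enc_mod[OF assms(2)] enc_mod[OF sw'] w w' by simp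
  have c3: "enc w div B ^ ?i mod B ^ length r = enc r"
    using enc_div[OF assms(2), of ?i] enc_mod[of "r @ y" "length r"] sets w by simp
  have c4: "enc w' div B ^ ?i mod B ^ length t = enc t"
    using enc_div[OF sw', of ?i] enc_mod[of "t @ y" "length t"] sets w' by simp
  have c5: "enc w div B ^ (?i + length r) = enc w' div B ^ (?i + length t)"
    using enc_div[OF assms(2), of "?i + length r"] enc_div[OF sw', of "?i + length t"] w w' by simp
  show ?thesis unfolding stepc_def using rt i c1 c2 c3 c4 c5 by blast
qed

lemma decomp: "u = u mod B ^ k + B ^ k * (u div B ^ k mod B ^ l + B ^ l * (u div B ^ (k + l)))"
proof -
  have "u div B ^ (k + l) = u div B ^ k div B ^ l" by (simp add: power_add div_mult2_eq)
  then show ?thesis by (metis mod_mult_div_eq)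
qed

lemma stepc_step:
  assumes "stepc (enc w) v" "set w \<subseteq> Sig"
  shows "\<exists>w'. v = enc w' \<and> set w' \<subseteq> Sig \<and> mw_step R w w'"
proof -
  obtain r t i where rt: "(r, t) \<in> R" and i: "i = 0 \<or> 0 < enc w div B ^ (i - 1)"
    and e1: "enc w mod B ^ i = v mod B ^ i"
    and e2: "enc w div B ^ i mod B ^ length r = enc r"
    and e3: "v div B ^ i mod B ^ length t = enc t"
    and e4: "enc w div B ^ (i + length r) = v div B ^ (i + length t)"
    using assms(1) unfolding stepc_def by blast
  have sr: "set r \<subseteq> Sig" and st: "set t \<subseteq> Sig" using RSig rt by auto
  have il: "i \<le> length w"
  proof (cases "i = 0")
    case False
    then have "0 < enc (drop (i - 1) w)" using i enc_div[OF assms(2)] by simp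
    then have "drop (i - 1) w \<noteq> []" by auto
    then show ?thesis using False by simp
  qed simp
  define x where "x = take i w"
  define y where "y = drop (i + length r) w"
  have lx: "length x = i" using il by (simp add: x_def)
  have sx: "set x \<subseteq> Sig" "set y \<subseteq> Sig" using assms(2)
    by (auto simp: x_def y_def dest: in_set_takeD in_set_dropD)
  have ex: "enc w mod B ^ i = enc x" using enc_mod[OF assms(2)] by (simp add: x_def)
  have ey: "enc w div B ^ (i + length r) = enc y" using enc_div[OF assms(2)] by (simp add: y_def)
  have "enc w = enc x + B ^ i * (enc r + B ^ length r * enc y)"
    using decomp[of "enc w" i "length r"] ex ey e2 by simp
  then have "enc w = enc (x @ r @ y)" using lx by (simp add: enc_append)
  then have w: "w = x @ r @ y" using enc_inj[OF assms(2)] sx sr by simp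
  have "v = enc x + B ^ i * (enc t + B ^ length t * enc y)"
    using decomp[of v i "length t"] ex ey e1 e3 e4 by simp
  then have v: "v = enc (x @ t @ y)" using lx by (simp add: enc_append)
  have "mw_step R w (x @ t @ y)" unfolding mw_step_def using rt w by blast
  then show ?thesis by (intro exI[of _ "x @ t @ y"]) (use v sx st in auto)
qed

lemma step_inv: "mw_step R u w \<Longrightarrow> set u \<subseteq> Sig \<Longrightarrow> set w \<subseteq> Sig \<and> length w \<le> length u + L"
  unfolding mw_step_def using RSig Lb by fastforce

lemma reach_inv: "(mw_step R ^^ k) s w \<Longrightarrow> set w \<subseteq> Sig \<and> length w \<le> length s + k * L"
proof (induction k arbitrary: w)
  case 0
  then show ?case using sSig by simp
next
  case (Suc k)
  from Suc.prems obtain u where u: "(mw_step R ^^ k) s u" "mw_step R u w" by (rule relpowp_Suc_E)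
  then have "set u \<subseteq> Sig \<and> length u \<le> length s + k * L" using Suc.IH by blast
  then show ?case using step_inv[OF u(2)] by auto
qed

definition NN :: "nat \<Rightarrow> nat" where "NN k = B ^ (length s + k * L)"

lemma enc_reach_less: "(mw_step R ^^ j) s w \<Longrightarrow> j \<le> k \<Longrightarrow> enc w < NN k"
proof -
  assume r: "(mw_step R ^^ j) s w" and jk: "j \<le> k"
  have "enc w < B ^ length w" using enc_less reach_inv[OF r] by blast
  also have "\<dots> \<le> B ^ (length s + k * L)"
  proof (rule power_increasing)
    have "length w \<le> length s + j * L" using reach_inv[OF r] by blast
    also have "\<dots> \<le> length s + k * L" using jk by (simp add: mult_le_mono1)
    finally show "length w \<le> length s + k * L" .
  qed (use B2 in simp)
  finally show ?thesis by (simp add: NN_def)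
qed

definition dg :: "nat \<Rightarrow> nat \<Rightarrow> nat \<Rightarrow> nat" where "dg p i M = p div M ^ i mod M"

definition Mem :: "nat \<Rightarrow> nat \<Rightarrow> bool" where
  "Mem k v \<longleftrightarrow> (\<exists>p<NN k ^ Suc k. dg p 0 (NN k) = enc s \<and> dg p k (NN k) = v
      \<and> (\<forall>i<k. stepc (dg p i (NN k)) (dg p (Suc i) (NN k))))"

lemma Mem_iff: "Mem k v \<longleftrightarrow> (\<exists>w. (mw_step R ^^ k) s w \<and> v = enc w)"
proof
  assume "Mem k v"
  then obtain p where p: "dg p 0 (NN k) = enc s" "dg p k (NN k) = v"
    "\<forall>i<k. stepc (dg p i (NN k)) (dg p (Suc i) (NN k))" unfolding Mem_def by blast
  have "i \<le> k \<longrightarrow> (\<exists>w. dg p i (NN k) = enc w \<and> set w \<subseteq> Sig \<and> (mw_step R ^^ i) s w)" for i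
  proof (induction i)
    case 0
    show ?case using p(1) sSig by auto
  next
    case (Suc i)
    show ?case
    proof
      assume ik: "Suc i \<le> k"
      then obtain w where w: "dg p i (NN k) = enc w" "set w \<subseteq> Sig" "(mw_step R ^^ i) s w"
        using Suc.IH by auto
      have "stepc (enc w) (dg p (Suc i) (NN k))" using p(3) ik w(1) by (metis Suc_le_lessD)
      then obtain w' where "dg p (Suc i) (NN k) = enc w'" "set w' \<subseteq> Sig" "mw_step R w w'"
        using stepc_step w(2) by blast
      then show "\<exists>w. dg p (Suc i) (NN k) = enc w \<and> set w \<subseteq> Sig \<and> (mw_step R ^^ Suc i) s w"
        using relpowp_Suc_I[OF w(3)] by blast
    qed
  qed
  then show "\<exists>w. (mw_step R ^^ k) s w \<and> v = enc w" using p(2) by auto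
next
  assume "\<exists>w. (mw_step R ^^ k) s w \<and> v = enc w"
  then obtain w where w: "(mw_step R ^^ k) s w" "v = enc w" by blast
  then obtain f where f: "f 0 = s" "f k = w" "\<forall>i<k. mw_step R (f i) (f (Suc i))"
    unfolding relpowp_fun_conv by blast
  have fr: "(mw_step R ^^ i) s (f i)" if "i \<le> k" for i
    using that
  proof (induction i)
    case 0
    then show ?case using f(1) by simp
  next
    case (Suc i)
    then have "(mw_step R ^^ i) s (f i)" by simp
    moreover have "mw_step R (f i) (f (Suc i))" using f(3) Suc.prems by simp
    ultimately show ?case by (rule relpowp_Suc_I)
  qed
  have fS: "set (f i) \<subseteq> Sig" if "i \<le> k" for i using reach_inv[OF fr[OF that]] by simp
  have fl: "enc (f i) < NN k" if "i \<le> k" for i using enc_reach_less[OF fr[OF that] that] .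
  define as where "as = map (\<lambda>i. enc (f i)) [0..<Suc k]"
  define p where "p = hn (NN k) as"
  have asd: "\<forall>a\<in>set as. a < NN k" using fl by (auto simp: as_def)
  have plt: "p < NN k ^ Suc k" using hn_less[OF asd] by (simp add: p_def as_def)
  have dgp: "dg p i (NN k) = enc (f i)" if "i \<le> k" for i
    using hn_nth[OF asd, of i] that by (simp add: dg_def p_def as_def nth_append del: upt_Suc)
  show "Mem k v" unfolding Mem_def
  proof (intro exI[of _ p] conjI allI impI)
    show "p < NN k ^ Suc k" by (rule plt)
    show "dg p 0 (NN k) = enc s" using dgp[of 0] f(1) by simp
    show "dg p k (NN k) = v" using dgp[of k] f(2) w(2) by simp
    fix i assume "i < k"
    then show "stepc (dg p i (NN k)) (dg p (Suc i) (NN k))"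
      using dgp[of i] dgp[of "Suc i"] step_stepc f(3) fS[of i] by simp
  qed
qed

definition Gc :: "nat \<Rightarrow> nat" where
  "Gc n = (\<Sum>v<NN (n - 1). if Mem (n - 1) v \<and> (\<forall>j<n - 1. \<not> Mem j v) then 1 else 0)"

lemma Gc_growth: "Gc n = growth R s n"
proof -
  let ?K = "n - 1"
  let ?P = "\<lambda>v. Mem ?K v \<and> (\<forall>j<?K. \<not> Mem j v)"
  have "Gc n = (\<Sum>v<NN ?K. of_bool (?P v))" unfolding Gc_def by (simp add: of_bool_def)
  also have "\<dots> = card ({..<NN ?K} \<inter> {v. ?P v})" by simp
  also have "{..<NN ?K} \<inter> {v. ?P v} = enc ` mw_layer R s ?K"
  proof (intro equalityI subsetI)
    fix v assume "v \<in> {..<NN ?K} \<inter> {v. ?P v}"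
    then have P: "?P v" by simp
    then obtain w where w: "(mw_step R ^^ ?K) s w" "v = enc w" using Mem_iff by blast
    have "\<not> (mw_step R ^^ j) s w" if "j < ?K" for j
      using P that Mem_iff w(2) by blast
    then show "v \<in> enc ` mw_layer R s ?K" using w unfolding mw_layer_def by blast
  next
    fix v assume "v \<in> enc ` mw_layer R s ?K"
    then obtain w where w: "(mw_step R ^^ ?K) s w" "\<forall>j<?K. \<not> (mw_step R ^^ j) s w" "v = enc w"
      unfolding mw_layer_def by blast
    have "v < NN ?K" using enc_reach_less[OF w(1)] w(3) by simp
    moreover have "Mem ?K v" using Mem_iff w by blast
    moreover have "\<not> Mem j v" if "j < ?K" for j
    proof
      assume "Mem j v"
      then obtain w' where w': "(mw_step R ^^ j) s w'" "v = enc w'" using Mem_iff by blast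
      have "w' = w" using enc_inj reach_inv[OF w'(1)] reach_inv[OF w(1)] w(3) w'(2) by metis
      then show False using w(2) w'(1) that by blast
    qed
    ultimately show "v \<in> {..<NN ?K} \<inter> {v. ?P v}" by blast
  qed
  also have "card (enc ` mw_layer R s ?K) = card (mw_layer R s ?K)"
  proof (rule card_image)
    show "inj_on enc (mw_layer R s ?K)"
      unfolding mw_layer_def by (rule inj_onI) (use enc_inj reach_inv in blast)
  qed
  finally show ?thesis unfolding growth_def .
qed

end


context mws
begin

lemma PRP_stepc2: "PRP 2 (\<lambda>xs. stepc (xs ! 0) (xs ! 1))"
proof -
  have H: "PRP 2 (\<lambda>xs. \<exists>i<Suc (xs ! 0). (i = 0 \<or> 0 < xs ! 0 div B ^ (i - 1))
     \<and> xs ! 0 mod B ^ i = xs ! 1 mod B ^ i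
     \<and> xs ! 0 div B ^ i mod B ^ length r = enc r
     \<and> xs ! 1 div B ^ i mod B ^ length t = enc t
     \<and> xs ! 0 div B ^ (i + length r) = xs ! 1 div B ^ (i + length t))" for r t
  proof (rule PRP_ex[where b="\<lambda>xs. Suc (xs ! 0)" and P="\<lambda>ys. (ys ! 0 = 0 \<or> 0 < ys ! 1 div B ^ (ys ! 0 - 1))
     \<and> ys ! 1 mod B ^ ys ! 0 = ys ! 2 mod B ^ ys ! 0
     \<and> ys ! 1 div B ^ ys ! 0 mod B ^ length r = enc r
     \<and> ys ! 2 div B ^ ys ! 0 mod B ^ length t = enc t
     \<and> ys ! 1 div B ^ (ys ! 0 + length r) = ys ! 2 div B ^ (ys ! 0 + length t)"])
    show "PRP (Suc 2) (\<lambda>ys. (ys ! 0 = 0 \<or> 0 < ys ! 1 div B ^ (ys ! 0 - 1))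
     \<and> ys ! 1 mod B ^ ys ! 0 = ys ! 2 mod B ^ ys ! 0
     \<and> ys ! 1 div B ^ ys ! 0 mod B ^ length r = enc r
     \<and> ys ! 2 div B ^ ys ! 0 mod B ^ length t = enc t
     \<and> ys ! 1 div B ^ (ys ! 0 + length r) = ys ! 2 div B ^ (ys ! 0 + length t))"
      by (intro PRP_and PRP_or PRP_eq PRP_less PRf_mod PRf_div PRf_pow PRf_add PRf_sub
            PRf_Suc PRf_proj PRf_const) simp_all
    show "PRf 2 (\<lambda>xs. Suc (xs ! 0))" by (intro PRf_Suc PRf_proj) simp
  qed simp
  show ?thesis unfolding stepc_def
    by (rule PRP_finex[OF finR]) (use H in \<open>simp add: split_beta\<close>)
qed

lemma PRP_stepc:
  assumes "PRf m f" "PRf m g" shows "PRP m (\<lambda>xs. stepc (f xs) (g xs))"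
proof -
  have "PRf m (\<lambda>xs. if stepc ([f xs, g xs] ! 0) ([f xs, g xs] ! 1) then 1 else 0)"
    by (rule PRf_comp2[OF PRP_stepc2[unfolded PRP_def] assms])
  then show ?thesis unfolding PRP_def by (rule PRf_cong) simp
qed

lemma PRf_NN: "PRf m f \<Longrightarrow> PRf m (\<lambda>xs. NN (f xs))"
  unfolding NN_def by (intro PRf_pow PRf_add PRf_mult PRf_const)

lemma PRf_dg: "PRf m p \<Longrightarrow> PRf m i \<Longrightarrow> PRf m M \<Longrightarrow> PRf m (\<lambda>xs. dg (p xs) (i xs) (M xs))"
  unfolding dg_def by (intro PRf_pow PRf_mod PRf_div)

lemma PRP_Mem2: "PRP 2 (\<lambda>xs. Mem (xs ! 0) (xs ! 1))"
  unfolding Mem_def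
proof (rule PRP_ex[where b="\<lambda>xs. NN (xs ! 0) ^ Suc (xs ! 0)" and
      P="\<lambda>ys. dg (ys ! 0) 0 (NN (ys ! 1)) = enc s \<and> dg (ys ! 0) (ys ! 1) (NN (ys ! 1)) = ys ! 2
      \<and> (\<forall>i<ys ! 1. stepc (dg (ys ! 0) i (NN (ys ! 1))) (dg (ys ! 0) (Suc i) (NN (ys ! 1))))"])
  have A: "PRP (Suc 2) (\<lambda>ys. \<forall>i<ys ! 1. stepc (dg (ys ! 0) i (NN (ys ! 1))) (dg (ys ! 0) (Suc i) (NN (ys ! 1))))"
  proof (rule PRP_all[where b="\<lambda>ys. ys ! 1" and
        P="\<lambda>zs. stepc (dg (zs ! 1) (zs ! 0) (NN (zs ! 2))) (dg (zs ! 1) (Suc (zs ! 0)) (NN (zs ! 2)))"])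
    show "PRP (Suc (Suc 2)) (\<lambda>zs. stepc (dg (zs ! 1) (zs ! 0) (NN (zs ! 2))) (dg (zs ! 1) (Suc (zs ! 0)) (NN (zs ! 2))))"
      by (intro PRP_stepc PRf_dg PRf_NN PRf_Suc PRf_proj PRf_const) simp_all
    show "PRf (Suc 2) (\<lambda>ys. ys ! 1)" by (intro PRf_proj) simp
  qed simp
  show "PRP (Suc 2) (\<lambda>ys. dg (ys ! 0) 0 (NN (ys ! 1)) = enc s \<and> dg (ys ! 0) (ys ! 1) (NN (ys ! 1)) = ys ! 2
      \<and> (\<forall>i<ys ! 1. stepc (dg (ys ! 0) i (NN (ys ! 1))) (dg (ys ! 0) (Suc i) (NN (ys ! 1)))))"
    by (intro PRP_and PRP_eq A PRf_dg PRf_NN PRf_Suc PRf_proj PRf_const) simp_all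
  show "PRf 2 (\<lambda>xs. NN (xs ! 0) ^ Suc (xs ! 0))"
    by (intro PRf_pow PRf_NN PRf_Suc PRf_proj) simp_all
qed simp

lemma PRP_Mem:
  assumes "PRf m f" "PRf m g" shows "PRP m (\<lambda>xs. Mem (f xs) (g xs))"
proof -
  have "PRf m (\<lambda>xs. if Mem ([f xs, g xs] ! 0) ([f xs, g xs] ! 1) then 1 else 0)"
    by (rule PRf_comp2[OF PRP_Mem2[unfolded PRP_def] assms])
  then show ?thesis unfolding PRP_def by (rule PRf_cong) simp
qed

lemma PRf_Gc: "PRf 1 (\<lambda>xs. Gc (xs ! 0))"
  unfolding Gc_def
proof (rule PRf_sum[where b="\<lambda>xs. NN (xs ! 0 - 1)" and
      f="\<lambda>ys. if Mem (ys ! 1 - 1) (ys ! 0) \<and> (\<forall>j<ys ! 1 - 1. \<not> Mem j (ys ! 0)) then 1 else 0"])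
  have A: "PRP (Suc 1) (\<lambda>ys. \<forall>j<ys ! 1 - 1. \<not> Mem j (ys ! 0))"
  proof (rule PRP_all[where b="\<lambda>ys. ys ! 1 - 1" and P="\<lambda>zs. \<not> Mem (zs ! 0) (zs ! 1)"])
    show "PRP (Suc (Suc 1)) (\<lambda>zs. \<not> Mem (zs ! 0) (zs ! 1))"
      by (intro PRP_not PRP_Mem PRf_proj) simp_all
    show "PRf (Suc 1) (\<lambda>ys. ys ! 1 - 1)" by (intro PRf_sub PRf_proj PRf_const) simp
  qed simp
  show "PRf (Suc 1) (\<lambda>ys. if Mem (ys ! 1 - 1) (ys ! 0) \<and> (\<forall>j<ys ! 1 - 1. \<not> Mem j (ys ! 0)) then 1 else 0)"
    by (intro PRf_if PRP_and A PRP_Mem PRf_sub PRf_proj PRf_const) simp_all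
  show "PRf 1 (\<lambda>xs. NN (xs ! 0 - 1))" by (intro PRf_NN PRf_sub PRf_proj PRf_const) simp
qed simp

lemma final: "\<exists>f. prim_rec 1 f \<and> (\<forall>n\<ge>1. f [n] = growth R s n)"
proof -
  obtain f where f: "prim_rec 1 f" "\<forall>xs. length xs = 1 \<longrightarrow> f xs = Gc (xs ! 0)"
    using PRf_Gc unfolding PRf_def by blast
  have "f [n] = growth R s n" for n using f(2)[rule_format, of "[n]"] Gc_growth by simp
  then show ?thesis using f(1) by blast
qed

end

theorem lemma5:
  fixes \<Sigma> :: "'a set" and R :: "('a list \<times> 'a list) set" and s_init :: "'a list"
  assumes "finite \<Sigma>" and "finite R"
    and "\<forall>(r, t)\<in>R. set r \<subseteq> \<Sigma> \<and> set t \<subseteq> \<Sigma>"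
    and "set s_init \<subseteq> \<Sigma>"
  shows "\<exists>f. prim_rec 1 f \<and> (\<forall>n\<ge>1. f [n] = growth R s_init n)"
proof -
  obtain h where h: "bij_betw h \<Sigma> {0..<card \<Sigma>}" using ex_bij_betw_finite_nat[OF assms(1)] by blast
  define L where "L = Max (insert 0 ((\<lambda>(r, t). length t) ` R))"
  have Lb: "\<forall>(r, t)\<in>R. length t \<le> L"
  proof (clarify)
    fix r t assume "(r, t) \<in> R"
    then have "length t \<in> insert 0 ((\<lambda>(r, t). length t) ` R)" by force
    then show "length t \<le> L" unfolding L_def using assms(2) by (intro Max_ge) auto
  qed
  have cpos: "\<forall>a\<in>\<Sigma>. 0 < Suc (h a) \<and> Suc (h a) < card \<Sigma> + 2"
    using h by (auto dest: bij_betw_apply)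
  have cinj: "inj_on (\<lambda>a. Suc (h a)) \<Sigma>"
    using bij_betw_imp_inj_on[OF h] by (auto simp: inj_on_def)
  interpret M: mws \<Sigma> R s_init "\<lambda>a. Suc (h a)" "card \<Sigma> + 2" L
    by unfold_locales (use assms Lb cpos cinj in auto)
  show ?thesis by (rule M.final)
qed

end
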